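(* Let $m\geq 0$ and $n>1$. There is an injection from $P_2(-m+1,n)$ to $Q_2(m,n)$.
   Context: Partitions are identified with their $m$-Durfee rectangle symbols, defined as follows. - For a partition $\lambda$ of $n$ with $\ell(\lambda)>m$ parts, let $j\geq1$ be the largest integer with $\lambda_{m+j}\geq j$. Let $\alpha$ be the partition whose $i$-th part is the number of $k\leq m+j$ with $\lambda_k\geq j+i$ (the columns right of the $(m+j)\times j$ rectangle). Let $\beta=(\lambda_{m+j+1},\lambda_{m+j+2},\ldots)$ (the rows below the rectangle). - If $\ell(\lambda)\leq m$, set $j=0$, $\alpha=\lambda'$ (the conjugate) and $\beta=\emptyset$. The symbol is written $(\alpha,\beta)_{(m+j)\times j}$, with $\ell(\cdot)$ denoting number of parts. The first part of an empty sequence is taken to be $0$. $P(-m+1,n)$ is the set of partitions of $n$ with rank (largest part minus number of parts) at least $-m+1$. $P_2(-m+1,n)$ is the set of those $(\alpha,\beta)_{(m+j)\times j}\in P(-m+1,n)$ with $j\geq1$ and $\beta_1=j-1$. The rank-set of $\lambda=(\lambda_1,\ldots,\lambda_\ell)$ is $[-\lambda_1,1-\lambda_2,\ldots,\ell-1-\lambda_\ell,\ell,\ell+1,\ldots]$. $Q(m,n)$ is the set of partitions of $n$ whose rank-set contains $m$. $Q_2(m,n)$ is the set of $(\gamma,\delta)_{(m+j')\times j'}\in Q(m,n)$ with $j'\geq1$, $\ell(\delta)-\ell(\gamma)\geq 0$ and $\gamma_1<m+j'$. *)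

theory Defs
  imports Main
begin

text \<open>A partition of n is a weakly decreasing list of positive naturals summing to n.
  Parts are 1-indexed in the paper: lambda_k = lam ! (k - 1).\<close>

definition is_partition :: "nat list \<Rightarrow> nat \<Rightarrow> bool" where
  "is_partition lam n \<longleftrightarrow> sorted_wrt (\<ge>) lam \<and> 0 \<notin> set lam \<and> sum_list lam = n"

definition partitions :: "nat \<Rightarrow> nat list set" where
  "partitions n = {lam. is_partition lam n}"

definition first_part :: "nat list \<Rightarrow> nat" where
  "first_part xs = (if xs = [] then 0 else hd xs)"

text \<open>The parameter j of the m-Durfee rectangle ((m+j) x j).\<close>
definition durfee_j :: "nat \<Rightarrow> nat list \<Rightarrow> nat" where
  "durfee_j m lam = (if length lam \<le> m then 0
     else (GREATEST j. 1 \<le> j \<and> m + j \<le> length lam \<and> j \<le> lam ! (m + j - 1)))"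

text \<open>alpha: i-th part is the number of k \<le> m+j with lambda_k \<ge> j+i
  (for j = 0 and length lam \<le> m this is exactly the conjugate of lam).\<close>
definition durfee_alpha :: "nat \<Rightarrow> nat list \<Rightarrow> nat list" where
  "durfee_alpha m lam = (let j = durfee_j m lam in
     filter (\<lambda>x. 0 < x)
       (map (\<lambda>i. card {k. k < m + j \<and> k < length lam \<and> j + i \<le> lam ! k})
            [1..<Suc (first_part lam)]))"

definition durfee_beta :: "nat \<Rightarrow> nat list \<Rightarrow> nat list" where
  "durfee_beta m lam = drop (m + durfee_j m lam) lam"

definition rank :: "nat list \<Rightarrow> int" where
  "rank lam = int (first_part lam) - int (length lam)"

definition P_set :: "nat \<Rightarrow> nat \<Rightarrow> nat list set" where
  "P_set m n = {lam \<in> partitions n. rank lam \<ge> 1 - int m}"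

definition P2_set :: "nat \<Rightarrow> nat \<Rightarrow> nat list set" where
  "P2_set m n = {lam \<in> P_set m n. durfee_j m lam \<ge> 1 \<and>
      first_part (durfee_beta m lam) = durfee_j m lam - 1}"

definition rank_set :: "nat list \<Rightarrow> int set" where
  "rank_set lam = {int k - 1 - int (lam ! (k - 1)) | k. 1 \<le> k \<and> k \<le> length lam}
                  \<union> {int k | k. length lam \<le> k}"

definition Q_set :: "nat \<Rightarrow> nat \<Rightarrow> nat list set" where
  "Q_set m n = {lam \<in> partitions n. int m \<in> rank_set lam}"

definition Q2_set :: "nat \<Rightarrow> nat \<Rightarrow> nat list set" where
  "Q2_set m n = {lam \<in> Q_set m n. durfee_j m lam \<ge> 1 \<and>
      length (durfee_alpha m lam) \<le> length (durfee_beta m lam) \<and>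
      first_part (durfee_alpha m lam) < m + durfee_j m lam}"

end

theory Submission
  imports Defs
begin

lemma sdrop_le:
  fixes xs :: "nat list"
  assumes "sorted_wrt (\<ge>) xs" "x \<in> set (drop k xs)"
  shows "x \<le> xs ! k"
proof -
  have k: "k < length xs" using assms(2) by (metis drop_eq_Nil empty_iff linorder_not_le list.set(1))
  have "drop k xs = xs ! k # drop (Suc k) xs" using k by (simp add: Cons_nth_drop_Suc)
  moreover have "sorted_wrt (\<ge>) (drop k xs)" using assms(1) by (simp add: sorted_wrt_drop)
  ultimately show ?thesis using assms(2) by (metis set_ConsD sorted_wrt.simps(2) order_refl)
qed

lemma stake_ge:
  fixes xs :: "nat list"
  assumes "sorted_wrt (\<ge>) xs" "x \<in> set (take k xs)" "k \<le> length xs"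
  shows "xs ! (k - 1) \<le> x"
proof -
  obtain i where i: "i < length (take k xs)" "x = take k xs ! i" using assms(2) by (metis in_set_conv_nth)
  have ik: "i < k" using i by simp
  have x: "x = xs ! i" using i by simp
  show ?thesis
  proof (cases "i = k - 1")
    case True thus ?thesis using x by (simp del: One_nat_def)
  next
    case False
    hence "i < k - 1" using ik by simp
    thus ?thesis using x assms(1,3) sorted_wrt_nth_less[OF assms(1), of i "k - 1"] by simp
  qed
qed

lemma P2_facts:
  assumes "lam \<in> P2_set m n"
  defines "j \<equiv> durfee_j m lam"
  shows "sorted_wrt (\<ge>) lam" "0 \<notin> set lam" "sum_list lam = n" "1 \<le> j" "m + j \<le> length lam"
    "j \<le> lam ! (m + j - 1)" "m + j < length lam \<Longrightarrow> lam ! (m + j) = j - 1"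
    "m + j = length lam \<Longrightarrow> j = 1" "length lam + 1 \<le> hd lam + m" "lam \<noteq> []"
proof -
  have A: "sorted_wrt (\<ge>) lam" "0 \<notin> set lam" "sum_list lam = n" "1 \<le> j"
     "int (first_part lam) - int (length lam) \<ge> 1 - int m"
     "first_part (drop (m + j) lam) = j - 1"
    using assms unfolding P2_set_def P_set_def partitions_def is_partition_def rank_def durfee_beta_def
    by auto
  thus "sorted_wrt (\<ge>) lam" "0 \<notin> set lam" "sum_list lam = n" "1 \<le> j" by auto
  have len: "\<not> length lam \<le> m" using A(4) unfolding j_def durfee_j_def by auto
  thus ne: "lam \<noteq> []" by auto
  define P where "P = (\<lambda>j. 1 \<le> j \<and> m + j \<le> length lam \<and> j \<le> lam ! (m + j - 1))"
  have jd: "j = Greatest P" using len unfolding j_def durfee_j_def P_def by simp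
  have "lam ! m \<in> set lam" using len by simp
  hence "lam ! m \<noteq> 0" using A(2) by metis
  hence P1: "P 1" using len unfolding P_def by simp
  have "P j" unfolding jd using GreatestI_nat[of P 1 "length lam", OF P1] by (auto simp add: P_def)
  thus "m + j \<le> length lam" "j \<le> lam ! (m + j - 1)" unfolding P_def by auto
  show "m + j < length lam \<Longrightarrow> lam ! (m + j) = j - 1"
    using A(6) by (simp add: first_part_def hd_drop_conv_nth)
  show "m + j = length lam \<Longrightarrow> j = 1"
    using A(6) A(4) by (simp add: first_part_def)
  show "length lam + 1 \<le> hd lam + m" using A(5) ne by (simp add: first_part_def)
qed

definition fmap :: "nat \<Rightarrow> nat list \<Rightarrow> nat list" where
  "fmap m lam = (let j = durfee_j m lam; r = tl lam in
     take (m + j - 1) r @ j # map Suc (drop (m + j - 1) r) @ replicate (hd lam + m - length lam) 1)"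

lemma sorted_rep: "sorted_wrt (\<ge>) (replicate c (x::nat))"
  by (induction c) auto

lemma sum_rep1: "sum_list (replicate c (Suc 0)) = c"
  by (induction c) auto

lemma sum_list_map_Suc: "sum_list (map Suc xs) = sum_list xs + length xs"
  by (induction xs) auto

lemma f_props:
  assumes "lam \<in> P2_set m n"
  defines "j \<equiv> durfee_j m lam"
  defines "mu \<equiv> fmap m lam"
  shows "is_partition mu n" "mu ! (m + j - 1) = j" "mu ! (m + j) = j"
    "length mu = hd lam + m" "\<forall>y\<in>set mu. y \<le> hd lam"
    "take (m + j - 1) mu = take (m + j - 1) (tl lam)"
    "drop (m + j) mu = map Suc (drop (m + j - 1) (tl lam)) @ replicate (hd lam + m - length lam) 1"
proof -
  note F = P2_facts[OF assms(1), folded j_def]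
  obtain a r where lr: "lam = a # r" using F(10) by (cases lam) auto
  define p where "p = m + j - 1"
  define c where "c = hd lam + m - length lam"
  have c1: "1 \<le> c" using F(9) unfolding c_def by simp
  have pl: "p \<le> length r" using F(5) lr unfolding p_def by simp
  have mu: "mu = take p r @ j # map Suc (drop p r) @ replicate c 1"
    unfolding mu_def fmap_def p_def c_def j_def using lr by (simp add: Let_def)
  have lt: "length (take p r) = p" using pl by simp
  show "mu ! (m + j - 1) = j" unfolding mu p_def[symmetric] using lt by (simp add: nth_append)
  have "mu ! (m + j) = (map Suc (drop p r) @ replicate c 1) ! 0"
  proof -
    have e: "m + j = Suc p" using F(4) unfolding p_def by simp
    show ?thesis unfolding e mu using lt by (simp add: nth_append)
  qed
  also have "\<dots> = j"
  proof (cases "p < length r")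
    case True
    have "(map Suc (drop p r) @ replicate c 1) ! 0 = Suc (r ! p)" using True by (simp add: nth_append)
    also have "r ! p = lam ! (m + j)" using lr F(4) unfolding p_def by simp
    also have "\<dots> = j - 1" using F(7) True lr F(4) unfolding p_def by simp
    finally show ?thesis using F(4) by simp
  next
    case False
    hence "m + j = length lam" using pl lr F(4) unfolding p_def by simp
    hence "j = 1" using F(8) by simp
    thus ?thesis using False pl c1 by (simp add: nth_append)
  qed
  finally show "mu ! (m + j) = j" .
  show "length mu = hd lam + m" unfolding mu using pl c1 F(9) lr unfolding c_def p_def by simp
  show "take (m + j - 1) mu = take (m + j - 1) (tl lam)" unfolding mu p_def[symmetric] using lt lr by simp
  show "drop (m + j) mu = map Suc (drop (m + j - 1) (tl lam)) @ replicate (hd lam + m - length lam) 1"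
    unfolding mu using lt lr F(4) unfolding p_def c_def by simp
  have sr: "sorted_wrt (\<ge>) r" using F(1) lr by simp
  have rz: "0 \<notin> set r" using F(2) lr by simp
  have tk: "\<forall>x\<in>set (take p r). j \<le> x"
  proof
    fix x assume "x \<in> set (take p r)"
    hence "x \<in> set (take (Suc p) lam)" using lr by simp
    hence "lam ! p \<le> x" using stake_ge[OF F(1), of x "Suc p"] pl lr by simp
    thus "j \<le> x" using F(6) unfolding p_def by simp
  qed
  have dr: "\<forall>x\<in>set (drop p r). Suc x \<le> j"
  proof
    fix x assume "x \<in> set (drop p r)"
    moreover have "m + j = Suc p" using F(4) unfolding p_def by simp
    ultimately have x: "x \<in> set (drop (m + j) lam)" using lr by simp
    hence "m + j < length lam" by (metis drop_eq_Nil empty_iff linorder_not_le list.set(1))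
    hence "lam ! (m + j) = j - 1" using F(7) by simp
    thus "Suc x \<le> j" using sdrop_le[OF F(1) x] F(4) by simp
  qed
  have tailsorted: "sorted_wrt (\<ge>) (j # map Suc (drop p r) @ replicate c 1)"
    using dr F(4) sorted_wrt_drop[OF sr, of p]
    by (auto simp: sorted_wrt_append sorted_wrt_map sorted_rep)
  have taille: "\<forall>y\<in>set (j # map Suc (drop p r) @ replicate c (1::nat)). y \<le> j"
    using dr F(4) by auto
  have sorted: "sorted_wrt (\<ge>) mu" unfolding mu
    apply (subst sorted_wrt_append)
    using sorted_wrt_take[OF sr, of p] tailsorted taille tk
    by (metis (no_types, lifting) le_trans)
  have nz: "0 \<notin> set mu" unfolding mu using rz F(4) by (auto dest: in_set_takeD)
  have "sum_list mu = sum_list (take p r) + j + (sum_list (drop p r) + length (drop p r)) + c"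
    unfolding mu by (simp add: sum_list_map_Suc sum_rep1)
  also have "\<dots> = sum_list r + (j + (length r - p) + c)"
  proof -
    have "sum_list r = sum_list (take p r) + sum_list (drop p r)"
      by (metis append_take_drop_id sum_list_append)
    thus ?thesis by simp
  qed
  also have "j + (length r - p) + c = a" using pl F(9) F(4) lr unfolding p_def c_def by simp
  finally have "sum_list mu = n" using F(3) lr by simp
  thus "is_partition mu n" using sorted nz unfolding is_partition_def by simp
  have ra: "\<forall>x\<in>set r. x \<le> a" using F(1) lr by auto
  have ja: "j \<le> a"
  proof -
    have "lam ! (m + j - 1) \<le> a"
      using lr F(5) ra by (cases "m + j - 1") (auto)
    thus ?thesis using F(6) by simp
  qed
  show "\<forall>y\<in>set mu. y \<le> hd lam" unfolding mu using ra ja dr lr F(4)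
    by (auto dest: in_set_takeD)
qed

lemma Q_char:
  assumes part: "is_partition mu n" and j1: "1 \<le> j" and len: "m + j < length mu"
    and e1: "mu ! (m + j - 1) = j" and e2: "mu ! (m + j) = j"
    and hl: "hd mu + m \<le> length mu"
  shows "durfee_j m mu = j" "mu \<in> Q2_set m n"
proof -
  have srt: "sorted_wrt (\<ge>) mu" using part unfolding is_partition_def by simp
  have ne: "mu \<noteq> []" using len by auto
  show dj: "durfee_j m mu = j"
  proof -
    have "(GREATEST j. 1 \<le> j \<and> m + j \<le> length mu \<and> j \<le> mu ! (m + j - 1)) = j"
    proof (rule Greatest_equality)
      show "1 \<le> j \<and> m + j \<le> length mu \<and> j \<le> mu ! (m + j - 1)" using j1 len e1 by simp
    next
      fix y assume y: "1 \<le> y \<and> m + y \<le> length mu \<and> y \<le> mu ! (m + y - 1)"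
      show "y \<le> j"
      proof (rule ccontr)
        assume "\<not> y \<le> j"
        hence "m + j < m + y - 1 \<or> m + j = m + y - 1" by auto
        hence "mu ! (m + y - 1) \<le> mu ! (m + j)"
          using sorted_wrt_nth_less[OF srt, of "m + j" "m + y - 1"] y by auto
        thus False using y e2 \<open>\<not> y \<le> j\<close> by simp
      qed
    qed
    thus ?thesis unfolding durfee_j_def using len by simp
  qed
  have fp: "first_part mu = hd mu" using ne by (simp add: first_part_def)
  have hdge: "\<forall>k<length mu. mu ! k \<le> hd mu"
  proof (intro allI impI)
    fix k assume "k < length mu"
    thus "mu ! k \<le> hd mu" using sorted_wrt_nth_less[OF srt, of 0 k] ne by (cases k) (auto simp: hd_conv_nth)
  qed
  define G where "G = (\<lambda>i. card {k. k < m + j \<and> k < length mu \<and> j + i \<le> mu ! k})"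
  have al: "durfee_alpha m mu = filter (\<lambda>x. 0 < x) (map G [1..<Suc (hd mu)])"
    unfolding durfee_alpha_def dj fp G_def Let_def by simp
  have rs: "int m \<in> rank_set mu"
  proof -
    have "int (m + j + 1) - 1 - int (mu ! (m + j + 1 - 1)) = int m" using e2 by simp
    moreover have "1 \<le> m + j + 1 \<and> m + j + 1 \<le> length mu" using len by simp
    ultimately have "int m \<in> {int k - 1 - int (mu ! (k - 1)) |k. 1 \<le> k \<and> k \<le> length mu}"
      by (intro CollectI exI[of _ "m + j + 1"]) auto
    thus ?thesis unfolding rank_set_def by blast
  qed
  have Gb: "\<forall>i\<in>set [1..<Suc (hd mu)]. G i < m + j"
  proof
    fix i assume "i \<in> set [1..<Suc (hd mu)]"
    hence i1: "1 \<le> i" by auto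
    have "{k. k < m + j \<and> k < length mu \<and> j + i \<le> mu ! k} \<subseteq> {..<m + j - 1}"
    proof
      fix k assume k: "k \<in> {k. k < m + j \<and> k < length mu \<and> j + i \<le> mu ! k}"
      have "k \<noteq> m + j - 1" using k e1 i1 by auto
      thus "k \<in> {..<m + j - 1}" using k by auto
    qed
    hence "G i \<le> m + j - 1" unfolding G_def by (metis card_lessThan card_mono finite_lessThan)
    thus "G i < m + j" using j1 by simp
  qed
  have fa: "first_part (durfee_alpha m mu) < m + j"
  proof (cases "durfee_alpha m mu = []")
    case True thus ?thesis using j1 by (simp add: first_part_def)
  next
    case False
    hence "hd (durfee_alpha m mu) \<in> set (durfee_alpha m mu)" by simp
    thus ?thesis using False Gb unfolding al by (auto simp: first_part_def)
  qed
  have G0: "\<And>i. hd mu - j < i \<Longrightarrow> G i = 0"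
  proof -
    fix i assume "hd mu - j < i"
    hence hj: "hd mu < j + i" by simp
    have "\<forall>k. \<not> (k < m + j \<and> k < length mu \<and> j + i \<le> mu ! k)"
    proof (intro allI notI)
      fix k assume "k < m + j \<and> k < length mu \<and> j + i \<le> mu ! k"
      hence "j + i \<le> hd mu" using hdge by (meson le_trans)
      thus False using hj by simp
    qed
    hence "{k. k < m + j \<and> k < length mu \<and> j + i \<le> mu ! k} = {}" by blast
    thus "G i = 0" unfolding G_def by simp
  qed
  have la: "length (durfee_alpha m mu) \<le> hd mu - j"
  proof -
    have spl: "[1..<Suc (hd mu)] = [1..<Suc (hd mu - j)] @ [Suc (hd mu - j)..<Suc (hd mu)]"
    proof -
      have jh: "j \<le> hd mu" using hdge e1 len by (metis Suc_diff_1 Suc_le_eq add_gr_0 j1 less_imp_le_nat less_le_trans zero_less_one)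
      show ?thesis using upt_add_eq_append[of 1 "Suc (hd mu - j)" j] jh by simp
    qed
    have "filter (\<lambda>x. 0 < x) (map G [Suc (hd mu - j)..<Suc (hd mu)]) = []"
      using G0 by (auto simp: filter_empty_conv)
    hence da: "durfee_alpha m mu = filter (\<lambda>x. 0 < x) (map G [1..<Suc (hd mu - j)])"
      unfolding al spl by simp
    have "length (filter (\<lambda>x. 0 < x) (map G [1..<Suc (hd mu - j)])) \<le> length (map G [1..<Suc (hd mu - j)])"
      by (rule length_filter_le)
    thus ?thesis unfolding da by (simp del: upt_Suc)
  qed
  have lb: "length (durfee_beta m mu) = length mu - (m + j)" unfolding durfee_beta_def dj by simp
  show "mu \<in> Q2_set m n"
    unfolding Q2_set_def Q_set_def partitions_def using part rs dj fa la lb hl j1 by auto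
qed


definition gmap :: "nat \<Rightarrow> nat list \<Rightarrow> nat list" where
  "gmap m mu = (let j = durfee_j m mu in (length mu - m) # take (m + j - 1) mu @
      map (\<lambda>x. x - 1) (filter (\<lambda>x. 2 \<le> x) (drop (m + j) mu)))"

lemma fmap_Q2_inv:
  assumes "lam \<in> P2_set m n"
  shows "fmap m lam \<in> Q2_set m n" "gmap m (fmap m lam) = lam"
proof -
  define j where "j = durfee_j m lam"
  define mu where "mu = fmap m lam"
  note F = P2_facts[OF assms(1), folded j_def]
  note G = f_props[OF assms(1), folded j_def mu_def]
  have len: "m + j < length mu" using G(4) F(5) F(9) by simp
  have mne: "mu \<noteq> []" using len by auto
  have hl: "hd mu + m \<le> length mu" using G(5) G(4) mne by simp
  note Q = Q_char[OF G(1) F(4) len G(2) G(3) hl]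
  show "fmap m lam \<in> Q2_set m n" using Q(2) unfolding mu_def .
  define D where "D = drop (m + j - 1) (tl lam)"
  have Dz: "0 \<notin> set D" using F(2) F(10) unfolding D_def
    by (metis in_set_dropD list.collapse set_subset_Cons subsetD)
  have filt: "filter (\<lambda>x. 2 \<le> x) (map Suc D @ replicate (hd lam + m - length lam) 1) = map Suc D"
  proof -
    have "filter (\<lambda>x. 2 \<le> x) (map Suc D) = map Suc D"
      using Dz by (intro filter_True) (auto simp: Suc_le_eq, metis gr0I)
    moreover have "filter (\<lambda>x. 2 \<le> x) (replicate (hd lam + m - length lam) (1::nat)) = []"
      by (induction "hd lam + m - length lam") auto
    ultimately show ?thesis by simp
  qed
  have "gmap m mu = hd lam # take (m + j - 1) (tl lam) @ D"
    unfolding gmap_def Let_def Q(1) G(6) G(7) G(4) filt D_def[symmetric]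
    by (simp add: comp_def)
  also have "\<dots> = lam" unfolding D_def using F(10) by simp
  finally show "gmap m (fmap m lam) = lam" unfolding mu_def .
qed

theorem lemma2p5:
  fixes m n :: nat
  assumes "n > 1"
  shows "\<exists>f. inj_on f (P2_set m n) \<and> f ` P2_set m n \<subseteq> Q2_set m n"
proof (intro exI conjI)
  show "inj_on (fmap m) (P2_set m n)"
    by (rule inj_on_inverseI[where g = "gmap m"]) (rule fmap_Q2_inv(2))
  show "fmap m ` P2_set m n \<subseteq> Q2_set m n" using fmap_Q2_inv(1) by blast
qed

end
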